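(* Let $d\ge1$ and $n\ge d+2$ be integers, and let $M$ be a $K_{d+2}$-matroid on $E(K_n)$. Then the rank of $M$ is at most $dn-\binom{d+1}{2}$.
   Context: A $K_{d+2}$-matroid on $E(K_n)$ is a matroid on the edge set of the complete graph $K_n$ in which the edge set of every copy of $K_{d+2}$ in $K_n$ is a circuit. *)

theory Defs
  imports Main
begin

definition matroid :: "'a set \<Rightarrow> ('a set \<Rightarrow> bool) \<Rightarrow> bool" where
  "matroid E indep \<longleftrightarrow>
     finite E \<and>
     (\<forall>X. indep X \<longrightarrow> X \<subseteq> E) \<and>
     indep {} \<and>
     (\<forall>X Y. indep Y \<and> X \<subseteq> Y \<longrightarrow> indep X) \<and>
     (\<forall>X Y. indep X \<and> indep Y \<and> card X < card Y \<longrightarrow>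
        (\<exists>y\<in>Y - X. indep (insert y X)))"

definition circuit :: "'a set \<Rightarrow> ('a set \<Rightarrow> bool) \<Rightarrow> 'a set \<Rightarrow> bool" where
  "circuit E indep C \<longleftrightarrow> C \<subseteq> E \<and> \<not> indep C \<and> (\<forall>D. D \<subset> C \<longrightarrow> indep D)"

definition matroid_rank :: "('a set \<Rightarrow> bool) \<Rightarrow> nat" where
  "matroid_rank indep = Max {card X | X. indep X}"

definition complete_edges :: "'v set \<Rightarrow> 'v set set" where
  "complete_edges V = {e. e \<subseteq> V \<and> card e = 2}"

definition K_matroid :: "nat \<Rightarrow> nat \<Rightarrow> (nat set set \<Rightarrow> bool) \<Rightarrow> bool" where
  "K_matroid d n indep \<longleftrightarrow>
     matroid (complete_edges {..<n}) indep \<and>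
     (\<forall>S. S \<subseteq> {..<n} \<and> card S = d + 2 \<longrightarrow>
        circuit (complete_edges {..<n}) indep (complete_edges S))"

end

theory Submission
  imports Defs
begin

lemma aug_ext:
  assumes m: "matroid E indep"
  shows "indep X \<Longrightarrow> indep Y \<Longrightarrow> \<exists>Z. indep Z \<and> X \<subseteq> Z \<and> Z \<subseteq> X \<union> Y \<and> card Y \<le> card Z"
proof (induction "card Y - card X" arbitrary: X rule: less_induct)
  case less
  show ?case
  proof (cases "card Y \<le> card X")
    case True then show ?thesis using less.prems by blast
  next
    case False
    then obtain y where y: "y \<in> Y - X" "indep (insert y X)"
      using m less.prems unfolding matroid_def by (meson not_le)
    have fin: "finite X" using m less.prems unfolding matroid_def by (meson finite_subset)
    have c: "card (insert y X) = card X + 1" using fin y by simp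
    have "card Y - card (insert y X) < card Y - card X" using c False by simp
    from less.hyps[OF this y(2) less.prems(2)] obtain Z where
      "indep Z" "insert y X \<subseteq> Z" "Z \<subseteq> insert y X \<union> Y" "card Y \<le> card Z" by blast
    then show ?thesis using y by blast
  qed
qed

lemma two_choose: "2 * (m choose 2) = m * (m - 1)"
proof (induction m)
  case (Suc m)
  have "Suc m choose 2 = (m choose 2) + m" by (simp add: numeral_2_eq_2)
  then show ?case using Suc by (cases m) (simp_all add: algebra_simps)
qed simp

lemma arith_part:
  assumes "d \<le> (n::nat)"
  shows "(n choose 2) - ((n - d) choose 2) \<le> d * n - ((d + 1) choose 2)"
proof -
  obtain k where n: "n = d + k" using assms le_Suc_ex by blast
  have a: "2 * (n choose 2) = n * (n - 1)" by (rule two_choose)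
  have b: "2 * ((n - d) choose 2) = k * (k - 1)" using two_choose[of k] n by simp
  have c: "2 * ((d+1) choose 2) = (d + 1) * d" using two_choose[of "d+1"] by simp
  have "2 * ((n choose 2) - ((n - d) choose 2)) \<le> 2 * (d * n - ((d + 1) choose 2))"
  proof -
    have "2 * ((n choose 2) - ((n - d) choose 2)) = n * (n - 1) - k * (k - 1)"
      using a b by (simp add: diff_mult_distrib2)
    also have "\<dots> = d * n * 2 - (d + 1) * d"
      unfolding n by (cases k; cases d) (simp_all add: algebra_simps)
    also have "\<dots> = 2 * (d * n - ((d + 1) choose 2))"
      using c by (simp add: diff_mult_distrib2 mult.commute)
    finally show ?thesis by simp
  qed
  then show ?thesis by simp
qed

theorem lemma4p1:
  fixes d n :: nat and indep :: "nat set set \<Rightarrow> bool"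
  assumes "d \<ge> 1" and "n \<ge> d + 2"
    and "K_matroid d n indep"
  shows "matroid_rank indep \<le> d * n - ((d + 1) choose 2)"
proof -
  define E where "E = complete_edges {..<n}"
  define A where "A = {..<d}"
  define F where "F = {e \<in> E. e \<inter> A \<noteq> {}}"
  have m: "matroid E indep" and circ: "\<And>S. S \<subseteq> {..<n} \<Longrightarrow> card S = d + 2 \<Longrightarrow> circuit E indep (complete_edges S)"
    using assms(3) unfolding K_matroid_def E_def by auto
  have finE: "finite E" using m unfolding matroid_def by simp
  have finF: "finite F" using finE unfolding F_def by simp
  have indsub: "\<And>X Y. indep Y \<Longrightarrow> X \<subseteq> Y \<Longrightarrow> indep X" using m unfolding matroid_def by blast
  have indE: "\<And>X. indep X \<Longrightarrow> X \<subseteq> E" using m unfolding matroid_def by blast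
  have finI: "\<And>X. indep X \<Longrightarrow> finite X" using indE finE by (meson finite_subset)
  have augm: "\<And>X Y. indep X \<Longrightarrow> indep Y \<Longrightarrow> card X < card Y \<Longrightarrow> \<exists>y\<in>Y - X. indep (insert y X)"
    using m unfolding matroid_def by blast
  have "\<exists>B. (B \<subseteq> F \<and> indep B) \<and> (\<forall>Y. (Y \<subseteq> F \<and> indep Y) \<longrightarrow> card Y \<le> card B)"
  proof (rule ex_has_greatest_nat[where k="{}" and b="card F + 1"])
    show "{} \<subseteq> F \<and> indep {}" using m unfolding matroid_def by simp
    show "\<forall>Y. Y \<subseteq> F \<and> indep Y \<longrightarrow> card Y < card F + 1"
      using finF card_mono by (auto simp add: less_Suc_eq_le)
  qed
  then obtain B where BF: "B \<subseteq> F" and Bi: "indep B"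
    and Bmax: "\<And>Y. Y \<subseteq> F \<Longrightarrow> indep Y \<Longrightarrow> card Y \<le> card B" by blast
  have key: "card I \<le> card B" if I: "indep I" for I
  proof (rule ccontr)
    assume "\<not> card I \<le> card B"
    then have "card B < card I" by simp
    then obtain y where y: "y \<in> I - B" "indep (insert y B)"
      using augm[OF Bi I] by blast
    have finB: "finite B" using finI Bi .
    have cB: "card (insert y B) = card B + 1" using y finB by simp
    show False
    proof (cases "y \<in> F")
      case True
      then show False using Bmax[of "insert y B"] BF y cB by simp
    next
      case False
      have yE: "y \<in> E" using indE I y by blast
      then have yn: "y \<subseteq> {..<n}" and y2: "card y = 2" unfolding E_def complete_edges_def by auto
      have yA: "y \<inter> A = {}" using False yE unfolding F_def by simp
      define S where "S = A \<union> y"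
      have An: "A \<subseteq> {..<n}" using assms(2) unfolding A_def by auto
      have Sn: "S \<subseteq> {..<n}" using An yn unfolding S_def by auto
      have finy: "finite y" using y2 by (metis card.infinite zero_neq_numeral)
      have cS: "card S = d + 2" unfolding S_def using card_Un_disjoint[of A y] yA y2 finy
        unfolding A_def by (simp add: Int_commute)
      have C: "circuit E indep (complete_edges S)" using circ Sn cS by blast
      have yC: "y \<in> complete_edges S" unfolding complete_edges_def S_def using y2 by auto
      have CF: "complete_edges S - {y} \<subseteq> F"
      proof
        fix e assume e: "e \<in> complete_edges S - {y}"
        then have eS: "e \<subseteq> S" and e2: "card e = 2" and ey: "e \<noteq> y"
          unfolding complete_edges_def by auto
        have "e \<inter> A \<noteq> {}"
        proof
          assume "e \<inter> A = {}"
          then have "e \<subseteq> y" using eS unfolding S_def by auto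
          then have "e = y" using card_subset_eq[OF finy] e2 y2 by simp
          then show False using ey by simp
        qed
        moreover have "e \<in> E" using eS Sn e2 unfolding E_def complete_edges_def by auto
        ultimately show "e \<in> F" unfolding F_def by simp
      qed
      have Ci: "indep (complete_edges S - {y})" using C yC unfolding circuit_def by blast
      obtain Z where Z: "indep Z" "complete_edges S - {y} \<subseteq> Z"
        "Z \<subseteq> (complete_edges S - {y}) \<union> insert y B" "card (insert y B) \<le> card Z"
        using aug_ext[OF m Ci y(2)] by blast
      show False
      proof (cases "y \<in> Z")
        case True
        then have "complete_edges S \<subseteq> Z" using Z(2) by blast
        then have "indep (complete_edges S)" using indsub Z(1) by blast
        then show False using C unfolding circuit_def by blast
      next
        case False
        then have "Z \<subseteq> F" using Z(3) CF BF by blast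
        then show False using Bmax[of Z] Z(1) Z(4) cB by simp
      qed
    qed
  qed
  have cardF: "card F = (n choose 2) - ((n - d) choose 2)"
  proof -
    have FE: "F = E - complete_edges ({..<n} - A)"
      unfolding F_def E_def complete_edges_def by auto
    have sub: "complete_edges ({..<n} - A) \<subseteq> E"
      unfolding E_def complete_edges_def by auto
    have "card F = card E - card (complete_edges ({..<n} - A))"
      unfolding FE using card_Diff_subset[OF finite_subset[OF sub finE] sub] .
    moreover have "card E = n choose 2"
      unfolding E_def complete_edges_def using n_subsets[of "{..<n}" 2] by simp
    moreover have "card (complete_edges ({..<n} - A)) = (n - d) choose 2"
      unfolding complete_edges_def using n_subsets[of "{..<n} - A" 2] unfolding A_def
      by (simp add: card_Diff_subset)
    ultimately show ?thesis by simp
  qed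
  have BleF: "card B \<le> card F" using card_mono[OF finF BF] .
  have fin: "finite {card X | X. indep X}"
  proof (rule finite_subset)
    show "{card X | X. indep X} \<subseteq> {..card E}" using indE card_mono[OF finE] by auto
  qed simp
  have ne: "{card X | X. indep X} \<noteq> {}" using Bi by blast
  have "matroid_rank indep \<le> card B"
    unfolding matroid_rank_def using key fin ne by (auto simp: Max_le_iff)
  also have "\<dots> \<le> card F" by (rule BleF)
  also have "\<dots> \<le> d * n - ((d + 1) choose 2)" unfolding cardF
    by (rule arith_part) (use assms(2) in simp)
  finally show ?thesis .
qed

end
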